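(* Let $Q=(M,\Omega)$ be a $3$-sheltering matroid on ground set $U$. The following are equivalent: (1) $M$ is binary, $r(M)\le|\Omega|$, and every class $\omega\in\Omega$ belongs to the cycle space of $M$; (2) there is a looped simple graph $G$ and a matroid isomorphism $M\to M[IAS(G)]$ that maps the classes of $\Omega$ onto the vertex triples of $G$.
   Context: A sheltering matroid is a pair $Q=(M,\Omega)$ where $M$ is a matroid on a finite set $U$ and $\Omega$ a partition of $U$ such that for every independent set $I$ of $M$ meeting each class in at most one element, and every $2$-element subset $\{x,y\}$ of a class $\omega$ with $\omega\cap I=\emptyset$, $I\cup\{x\}$ or $I\cup\{y\}$ is independent in $M$. It is a $3$-sheltering matroid if all classes of $\Omega$ have size $3$. The cycle space of a binary matroid $M$ on $U$ is the set of subsets of $U$ that are disjoint unions (equivalently symmetric differences) of circuits; for a binary representation, these are the sets of columns summing to $0$. A looped simple graph is a finite graph in which each vertex carries at most one loop and no two distinct vertices are joined by more than one edge. $A(G)$ is the $V(G)\times V(G)$ matrix over $GF(2)$ with diagonal entry $1$ exactly at looped vertices and off-diagonal entry $1$ exactly for adjacent distinct vertices. $IAS(G)=(I\mid A(G)\mid A(G)+I)$ over $GF(2)$, rows indexed by $V(G)$; the $v$-columns of the three blocks are labelled $\phi_G(v),\chi_G(v),\psi_G(v)$. $M[IAS(G)]$ is the binary column matroid of $IAS(G)$ on $W(G)=\{\phi_G(v),\chi_G(v),\psi_G(v):v\in V(G)\}$, and the vertex triple of $v$ is $\{\phi_G(v),\chi_G(v),\psi_G(v)\}$. *)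

theory Defs
  imports Main "HOL-Library.Z2" "HOL-Library.Disjoint_Sets"
begin

definition matroid :: "'a set \<Rightarrow> ('a set \<Rightarrow> bool) \<Rightarrow> bool" where
  "matroid U indep \<longleftrightarrow>
     finite U \<and>
     (\<forall>I. indep I \<longrightarrow> I \<subseteq> U) \<and>
     indep {} \<and>
     (\<forall>I J. indep J \<and> I \<subseteq> J \<longrightarrow> indep I) \<and>
     (\<forall>I J. indep I \<and> indep J \<and> card I < card J \<longrightarrow> (\<exists>x\<in>J - I. indep (insert x I)))"

definition mrank :: "('a set \<Rightarrow> bool) \<Rightarrow> nat" where
  "mrank indep = Max {card I | I. indep I}"

definition circuit :: "'a set \<Rightarrow> ('a set \<Rightarrow> bool) \<Rightarrow> 'a set \<Rightarrow> bool" where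
  "circuit U indep C \<longleftrightarrow> C \<subseteq> U \<and> \<not> indep C \<and> (\<forall>x\<in>C. indep (C - {x}))"

definition cycle_space :: "'a set \<Rightarrow> ('a set \<Rightarrow> bool) \<Rightarrow> 'a set set" where
  "cycle_space U indep = {\<Union>F | F. F \<subseteq> {C. circuit U indep C} \<and> disjoint F}"

definition gf2_lin_indep :: "('e \<Rightarrow> 'r \<Rightarrow> bit) \<Rightarrow> 'e set \<Rightarrow> bool" where
  "gf2_lin_indep v I \<longleftrightarrow>
     (\<forall>c :: 'e \<Rightarrow> bit. (\<forall>r. (\<Sum>x\<in>I. c x * v x r) = 0) \<longrightarrow> (\<forall>x\<in>I. c x = 0))"

definition col_indep :: "'e set \<Rightarrow> ('e \<Rightarrow> 'r \<Rightarrow> bit) \<Rightarrow> 'e set \<Rightarrow> bool" where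
  "col_indep U v I \<longleftrightarrow> I \<subseteq> U \<and> gf2_lin_indep v I"

definition binary :: "'a set \<Rightarrow> ('a set \<Rightarrow> bool) \<Rightarrow> bool" where
  "binary U indep \<longleftrightarrow> (\<exists>v :: 'a \<Rightarrow> nat \<Rightarrow> bit. \<forall>I. indep I \<longleftrightarrow> col_indep U v I)"

definition sheltering :: "'a set \<Rightarrow> ('a set \<Rightarrow> bool) \<Rightarrow> 'a set set \<Rightarrow> bool" where
  "sheltering U indep \<Omega> \<longleftrightarrow>
     matroid U indep \<and> partition_on U \<Omega> \<and>
     (\<forall>I. indep I \<and> (\<forall>\<omega>\<in>\<Omega>. card (I \<inter> \<omega>) \<le> 1) \<longrightarrow>
        (\<forall>\<omega>\<in>\<Omega>. \<omega> \<inter> I = {} \<longrightarrow>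
           (\<forall>x y. x \<in> \<omega> \<and> y \<in> \<omega> \<and> x \<noteq> y \<longrightarrow> indep (insert x I) \<or> indep (insert y I))))"

definition three_sheltering :: "'a set \<Rightarrow> ('a set \<Rightarrow> bool) \<Rightarrow> 'a set set \<Rightarrow> bool" where
  "three_sheltering U indep \<Omega> \<longleftrightarrow> sheltering U indep \<Omega> \<and> (\<forall>\<omega>\<in>\<Omega>. card \<omega> = 3)"

text \<open>A looped simple graph: finite vertex set V and a set E of edges, each edge being
  a 1-element (loop) or 2-element subset of V.  Hence at most one loop per vertex and
  no parallel edges.\<close>
definition looped_simple_graph :: "'v set \<Rightarrow> 'v set set \<Rightarrow> bool" where
  "looped_simple_graph V E \<longleftrightarrow> finite V \<and> (\<forall>e\<in>E. e \<subseteq> V \<and> (card e = 1 \<or> card e = 2))"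

text \<open>Adjacency matrix over GF(2): diagonal 1 at looped vertices, off-diagonal 1 for
  adjacent vertices.\<close>
definition adj_matrix :: "'v set set \<Rightarrow> 'v \<Rightarrow> 'v \<Rightarrow> bit" where
  "adj_matrix E v w = (if {v, w} \<in> E then 1 else 0)"

datatype 'v wlabel = Phi 'v | Chi 'v | Psi 'v

definition W :: "'v set \<Rightarrow> 'v wlabel set" where
  "W V = Phi ` V \<union> Chi ` V \<union> Psi ` V"

definition vertex_triple :: "'v \<Rightarrow> 'v wlabel set" where
  "vertex_triple v = {Phi v, Chi v, Psi v}"

text \<open>Columns of IAS(G) = (I | A(G) | A(G)+I), rows indexed by vertices.\<close>
fun ias_col :: "'v set set \<Rightarrow> 'v wlabel \<Rightarrow> 'v \<Rightarrow> bit" where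
  "ias_col E (Phi v) = (\<lambda>u. if u = v then 1 else 0)"
| "ias_col E (Chi v) = (\<lambda>u. adj_matrix E u v)"
| "ias_col E (Psi v) = (\<lambda>u. adj_matrix E u v + (if u = v then 1 else 0))"

definition ias_indep :: "'v set \<Rightarrow> 'v set set \<Rightarrow> 'v wlabel set \<Rightarrow> bool" where
  "ias_indep V E = col_indep (W V) (ias_col E)"

definition matroid_iso :: "('a \<Rightarrow> 'b) \<Rightarrow> 'a set \<Rightarrow> ('a set \<Rightarrow> bool) \<Rightarrow> 'b set \<Rightarrow> ('b set \<Rightarrow> bool) \<Rightarrow> bool" where
  "matroid_iso f U indep U' indep' \<longleftrightarrow>
     bij_betw f U U' \<and> (\<forall>I. I \<subseteq> U \<longrightarrow> (indep I \<longleftrightarrow> indep' (f ` I)))"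

end

theory Submission
  imports Defs
begin


declare add_bit_eq_xor[simp del] mult_bit_eq_and[simp del]

lemma bit_add_self[simp]: "(a::bit) + a = 0"
  by (cases a) simp_all

lemma bit_add_eq0: "(a::bit) + b = 0 \<longleftrightarrow> a = b"
  by (cases a; cases b) simp_all

lemma bit_cases2: "(a::bit) = 0 \<or> a = 1" by (cases a) simp_all

lemma gf2D: "gf2_lin_indep v I \<Longrightarrow> (\<forall>r. (\<Sum>x\<in>I. c x * v x r) = 0) \<Longrightarrow> x \<in> I \<Longrightarrow> c x = 0"
  by (simp add: gf2_lin_indep_def)

lemma gf2_mono:
  assumes "gf2_lin_indep v J" "K \<subseteq> J" "finite J"
  shows "gf2_lin_indep v K"
  unfolding gf2_lin_indep_def
proof (intro allI impI ballI)
  fix c x assume h: "\<forall>r. (\<Sum>x\<in>K. c x * v x r) = 0" and x: "x\<in>K"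
  let ?c = "\<lambda>y. if y \<in> K then c y else 0"
  have "\<forall>r. (\<Sum>y\<in>J. ?c y * v y r) = 0"
  proof
    fix r
    have "(\<Sum>y\<in>J. ?c y * v y r) = (\<Sum>y\<in>J. if y \<in> K then c y * v y r else 0)"
      by (rule sum.cong) auto
    also have "\<dots> = (\<Sum>y\<in>J \<inter> K. c y * v y r)"
      using sum.inter_restrict[OF assms(3)] by metis
    also have "J \<inter> K = K" using assms(2) by auto
    finally show "(\<Sum>y\<in>J. ?c y * v y r) = 0" using h by simp
  qed
  from gf2D[OF assms(1) this, of x] show "c x = 0" using x assms(2) by auto
qed

lemma gf2_insert_row:
  assumes "gf2_lin_indep v J" "finite J" "\<forall>z\<in>J. v z r0 = 0" "v x r0 = 1" "x \<notin> J"
  shows "gf2_lin_indep v (insert x J)"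
  unfolding gf2_lin_indep_def
proof (intro allI impI)
  fix c assume h: "\<forall>r. (\<Sum>y\<in>insert x J. c y * v y r) = 0"
  have s: "\<And>r. (\<Sum>y\<in>insert x J. c y * v y r) = c x * v x r + (\<Sum>y\<in>J. c y * v y r)"
    using assms(2,5) by simp
  have "(\<Sum>y\<in>J. c y * v y r0) = 0" using assms(3) by simp
  then have cx: "c x = 0" using h s[of r0] assms(4) by simp
  then have "\<forall>r. (\<Sum>y\<in>J. c y * v y r) = 0" using h s by simp
  then have "\<forall>y\<in>J. c y = 0" using assms(1) unfolding gf2_lin_indep_def by blast
  then show "\<forall>y\<in>insert x J. c y = 0" using cx by simp
qed

lemma gf2_dep:
  assumes "y \<notin> I" "S \<subseteq> I" "finite I" "\<forall>r. v y r = (\<Sum>z\<in>S. v z r)"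
  shows "\<not> gf2_lin_indep v (insert y I)"
proof
  assume ind: "gf2_lin_indep v (insert y I)"
  let ?c = "\<lambda>z. if z = y \<or> z \<in> S then 1 else (0::bit)"
  have "\<forall>r. (\<Sum>z\<in>insert y I. ?c z * v z r) = 0"
  proof
    fix r
    have "(\<Sum>z\<in>insert y I. ?c z * v z r) = v y r + (\<Sum>z\<in>I. ?c z * v z r)"
      using assms(1,3) by simp
    also have "(\<Sum>z\<in>I. ?c z * v z r) = (\<Sum>z\<in>I. if z \<in> S then v z r else 0)"
      using assms(1) by (intro sum.cong) auto
    also have "\<dots> = (\<Sum>z\<in>I \<inter> S. v z r)"
      using sum.inter_restrict[OF assms(3)] by metis
    also have "I \<inter> S = S" using assms(2) by auto
    finally show "(\<Sum>z\<in>insert y I. ?c z * v z r) = 0" using assms(4) by simp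
  qed
  from gf2D[OF ind this, of y] show False by simp
qed

lemma gf2_reindex:
  assumes "inj_on h J"
  shows "gf2_lin_indep v (h ` J) \<longleftrightarrow> gf2_lin_indep (\<lambda>x. v (h x)) J"
proof
  assume L: "gf2_lin_indep v (h ` J)"
  show "gf2_lin_indep (\<lambda>x. v (h x)) J" unfolding gf2_lin_indep_def
  proof (intro allI impI ballI)
    fix c x assume H: "\<forall>r. (\<Sum>x\<in>J. c x * v (h x) r) = 0" and x: "x \<in> J"
    let ?c = "\<lambda>y. c (inv_into J h y)"
    have "\<forall>r. (\<Sum>y\<in>h ` J. ?c y * v y r) = 0"
    proof
      fix r
      have "(\<Sum>y\<in>h ` J. ?c y * v y r) = (\<Sum>x\<in>J. ?c (h x) * v (h x) r)"
        using sum.reindex[OF assms] by (simp add: comp_def)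
      also have "\<dots> = (\<Sum>x\<in>J. c x * v (h x) r)"
        using assms by (intro sum.cong) (auto simp: inv_into_f_f)
      finally show "(\<Sum>y\<in>h ` J. ?c y * v y r) = 0" using H by simp
    qed
    from gf2D[OF L this, of "h x"]
    show "c x = 0" using assms x by (simp add: inv_into_f_f)
  qed
next
  assume R: "gf2_lin_indep (\<lambda>x. v (h x)) J"
  show "gf2_lin_indep v (h ` J)" unfolding gf2_lin_indep_def
  proof (intro allI impI ballI)
    fix c y assume H: "\<forall>r. (\<Sum>y\<in>h ` J. c y * v y r) = 0" and y: "y \<in> h ` J"
    have "\<forall>r. (\<Sum>x\<in>J. c (h x) * v (h x) r) = 0"
    proof
      fix r
      have "(\<Sum>y\<in>h ` J. c y * v y r) = (\<Sum>x\<in>J. c (h x) * v (h x) r)"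
        using sum.reindex[OF assms, of "\<lambda>y. c y * v y r"] by (simp add: comp_def)
      then show "(\<Sum>x\<in>J. c (h x) * v (h x) r) = 0" using H by simp
    qed
    from gf2D[OF R this] have "\<forall>x\<in>J. c (h x) = 0" by blast
    then show "c y = 0" using y by auto
  qed
qed

lemma gf2_coord:
  assumes fJ: "finite J" and fV: "finite V"
    and base: "\<forall>d. (\<forall>r. (\<Sum>w\<in>V. d w * b w r) = 0) \<longrightarrow> (\<forall>w\<in>V. d w = 0)"
    and rep: "\<forall>x\<in>J. \<forall>r. v x r = (\<Sum>w\<in>V. co x w * b w r)"
    and supp: "\<forall>x\<in>J. \<forall>w. w \<notin> V \<longrightarrow> co x w = 0"
  shows "gf2_lin_indep v J \<longleftrightarrow> gf2_lin_indep co J"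
proof -
  have key: "(\<forall>r. (\<Sum>x\<in>J. c x * v x r) = 0) \<longleftrightarrow> (\<forall>w. (\<Sum>x\<in>J. c x * co x w) = 0)" for c
  proof -
    have eq: "(\<Sum>x\<in>J. c x * v x r) = (\<Sum>w\<in>V. (\<Sum>x\<in>J. c x * co x w) * b w r)" for r
    proof -
      have "(\<Sum>x\<in>J. c x * v x r) = (\<Sum>x\<in>J. \<Sum>w\<in>V. c x * co x w * b w r)"
        using rep by (intro sum.cong) (auto simp: sum_distrib_left mult.assoc)
      also have "\<dots> = (\<Sum>w\<in>V. \<Sum>x\<in>J. c x * co x w * b w r)"
        by (rule sum.swap)
      also have "\<dots> = (\<Sum>w\<in>V. (\<Sum>x\<in>J. c x * co x w) * b w r)"
        by (simp add: sum_distrib_right)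
      finally show ?thesis .
    qed
    show ?thesis
    proof
      assume "\<forall>r. (\<Sum>x\<in>J. c x * v x r) = 0"
      then have "\<forall>w\<in>V. (\<Sum>x\<in>J. c x * co x w) = 0"
        using base[rule_format, of "\<lambda>w. (\<Sum>x\<in>J. c x * co x w)"] eq by simp
      moreover have "\<forall>w. w \<notin> V \<longrightarrow> (\<Sum>x\<in>J. c x * co x w) = 0"
        using supp by simp
      ultimately show "\<forall>w. (\<Sum>x\<in>J. c x * co x w) = 0" by blast
    next
      assume "\<forall>w. (\<Sum>x\<in>J. c x * co x w) = 0"
      then show "\<forall>r. (\<Sum>x\<in>J. c x * v x r) = 0" using eq by simp
    qed
  qed
  show ?thesis unfolding gf2_lin_indep_def using key by blast
qed

lemma unit_sum: "finite S \<Longrightarrow> (\<Sum>w\<in>S. (if r = w then 1 else 0 :: bit)) = (if r \<in> S then 1 else 0)"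
  by (simp add: sum.delta)

lemma unit_indep:
  assumes "finite V" "inj_on t V" "\<forall>w\<in>V. \<forall>r. v (t w) r = (if r = w then 1 else 0)"
  shows "gf2_lin_indep v (t ` V)"
proof -
  have "gf2_lin_indep (\<lambda>x. v (t x)) V" unfolding gf2_lin_indep_def
proof (intro allI impI ballI)
  fix c x assume H: "\<forall>r. (\<Sum>x\<in>V. c x * v (t x) r) = 0" and x: "x \<in> V"
  have "(\<Sum>y\<in>V. c y * v (t y) x) = (\<Sum>y\<in>V. if x = y then c y else 0)"
    using assms(3) by (intro sum.cong) auto
  also have "\<dots> = c x" using assms(1) x by (simp add: sum.delta)
  finally show "c x = 0" using H by simp
qed
  then show ?thesis using gf2_reindex[OF assms(2), of v] by blast
qed

lemma circuit_sum:
  assumes rep: "\<forall>I. indep I \<longleftrightarrow> col_indep U vec I" and C: "circuit U indep C" and fU: "finite U"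
  shows "(\<Sum>x\<in>C. vec x r) = 0"
proof -
  have CU: "C \<subseteq> U" and nd: "\<not> indep C" and mi: "\<forall>x\<in>C. indep (C - {x})"
    using C unfolding circuit_def by auto
  have fC: "finite C" using CU fU finite_subset by blast
  from nd CU rep obtain c x0 where H: "\<forall>r. (\<Sum>x\<in>C. c x * vec x r) = 0" and x0: "x0 \<in> C" "c x0 \<noteq> 0"
    unfolding col_indep_def gf2_lin_indep_def by blast
  have all1: "c y = 1" if y: "y \<in> C" for y
  proof (rule ccontr)
    assume "c y \<noteq> 1" then have cy: "c y = 0" by simp
    have "gf2_lin_indep vec (C - {y})" using mi y rep unfolding col_indep_def by blast
    moreover have "\<forall>r. (\<Sum>x\<in>C - {y}. c x * vec x r) = 0"
    proof
      fix r
      have "(\<Sum>x\<in>C. c x * vec x r) = c y * vec y r + (\<Sum>x\<in>C - {y}. c x * vec x r)"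
        using fC y by (simp add: sum.remove)
      then show "(\<Sum>x\<in>C - {y}. c x * vec x r) = 0" using H cy by simp
    qed
    ultimately have "c x0 = 0" using x0 cy unfolding gf2_lin_indep_def by (metis DiffI singletonD)
    then show False using x0 by simp
  qed
  have "(\<Sum>x\<in>C. vec x r) = (\<Sum>x\<in>C. c x * vec x r)" using all1 by (intro sum.cong) auto
  then show ?thesis using H by simp
qed

lemma cycle_sum:
  assumes rep: "\<forall>I. indep I \<longleftrightarrow> col_indep U vec I" and w: "\<omega> \<in> cycle_space U indep" and fU: "finite U"
  shows "(\<Sum>x\<in>\<omega>. vec x r) = 0"
proof -
  obtain F where F: "\<omega> = \<Union>F" "F \<subseteq> {C. circuit U indep C}" "disjoint F"
    using w unfolding cycle_space_def by blast
  have sub: "\<forall>C\<in>F. C \<subseteq> U" using F(2) unfolding circuit_def by auto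
  then have fF: "finite F" using fU by (metis Pow_iff finite_Pow_iff finite_subset subsetI)
  have fC: "\<forall>C\<in>F. finite C" using sub fU finite_subset by blast
  have "(\<Sum>x\<in>\<omega>. vec x r) = (\<Sum>C\<in>F. \<Sum>x\<in>C. vec x r)"
    unfolding F(1) using F(3) fF fC
    by (subst sum.Union_disjoint) (auto simp: disjoint_def)
  also have "\<dots> = 0" using circuit_sum[OF rep _ fU] F(2) by (intro sum.neutral) auto
  finally show ?thesis .
qed



lemma gf2_cong: "(\<And>x. x \<in> J \<Longrightarrow> v x = v' x) \<Longrightarrow> gf2_lin_indep v J \<longleftrightarrow> gf2_lin_indep v' J"
  unfolding gf2_lin_indep_def by (simp cong: sum.cong)

lemma sum_delta_mult:
  assumes "finite V" "w \<in> V"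
  shows "(\<Sum>u\<in>V. (if u = w then 1 else 0) * (f u :: bit)) = f w"
proof -
  have "(\<Sum>u\<in>V. (if u = w then 1 else 0) * f u) = (\<Sum>u\<in>V. if u = w then f u else 0)"
    by (rule sum.cong) auto
  also have "\<dots> = f w" using assms by (simp add: sum.delta)
  finally show ?thesis .
qed

locale S1 =
  fixes U :: "'a set" and indep :: "'a set \<Rightarrow> bool" and \<Omega> :: "'a set set"
    and vec :: "'a \<Rightarrow> nat \<Rightarrow> bit" and V :: "nat set" and g :: "nat \<Rightarrow> 'a set"
    and t a b :: "nat \<Rightarrow> 'a"
  assumes sh: "sheltering U indep \<Omega>"
    and rep: "\<forall>I. indep I \<longleftrightarrow> col_indep U vec I"
    and fV: "finite V"
    and gbij: "bij_betw g V \<Omega>"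
    and abc: "\<forall>w\<in>V. g w = {t w, a w, b w} \<and> t w \<noteq> a w \<and> t w \<noteq> b w \<and> a w \<noteq> b w"
    and indT: "indep (t ` V)"
    and span: "\<forall>x\<in>U. \<exists>c. \<forall>r. vec x r = (\<Sum>w\<in>V. c w * vec (t w) r)"
    and cyc: "\<forall>w\<in>V. \<forall>r. vec (b w) r = vec (t w) r + vec (a w) r"
begin

lemma mat: "matroid U indep" and part: "partition_on U \<Omega>"
  using sh unfolding sheltering_def by auto

lemma fU: "finite U" using mat unfolding matroid_def by auto

lemma gO: "w \<in> V \<Longrightarrow> g w \<in> \<Omega>" using gbij bij_betwE by blast

lemma gU: "w \<in> V \<Longrightarrow> g w \<subseteq> U" using gO part unfolding partition_on_def by auto

lemma dj: assumes "w \<in> V" "w' \<in> V" "x \<in> g w" "x \<in> g w'" shows "w = w'"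
proof -
  have "g w = g w'"
  proof (rule ccontr)
    assume "g w \<noteq> g w'"
    then have "g w \<inter> g w' = {}" using part gO assms(1,2) unfolding partition_on_def disjoint_def by blast
    then show False using assms(3,4) by auto
  qed
  then show ?thesis using gbij assms(1,2) unfolding bij_betw_def inj_on_def by blast
qed

lemma mem: assumes "w \<in> V" shows "t w \<in> g w" "a w \<in> g w" "b w \<in> g w"
  using abc assms by auto

lemma memU: assumes "w \<in> V" shows "t w \<in> U" "a w \<in> U" "b w \<in> U"
  using mem[OF assms] gU[OF assms] by auto

lemma injt: "inj_on t V"
  unfolding inj_on_def using mem dj by metis

lemma tVU: "t ` V \<subseteq> U" using memU by auto

lemma base: "\<forall>d. (\<forall>r. (\<Sum>w\<in>V. d w * vec (t w) r) = 0) \<longrightarrow> (\<forall>w\<in>V. d w = 0)"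
proof -
  have "gf2_lin_indep vec (t ` V)" using indT rep unfolding col_indep_def by simp
  then have "gf2_lin_indep (\<lambda>w. vec (t w)) V" using gf2_reindex[OF injt] by blast
  then show ?thesis unfolding gf2_lin_indep_def by blast
qed

definition coord :: "'a \<Rightarrow> nat \<Rightarrow> bit" where
  "coord x = (SOME c. (\<forall>w. w \<notin> V \<longrightarrow> c w = 0) \<and> (\<forall>r. vec x r = (\<Sum>w\<in>V. c w * vec (t w) r)))"

lemma coord_unique:
  assumes d1: "\<forall>w. w \<notin> V \<longrightarrow> d w = 0" and d2: "\<forall>r. vec x r = (\<Sum>w\<in>V. d w * vec (t w) r)"
  shows "coord x = d"
proof -
  let ?P = "\<lambda>c. (\<forall>w. w \<notin> V \<longrightarrow> c w = 0) \<and> (\<forall>r. vec x r = (\<Sum>w\<in>V. c w * vec (t w) r))"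
  have "?P d" using d1 d2 by blast
  then have P: "?P (coord x)" unfolding coord_def using someI[of ?P d] by blast
  have "\<forall>r. (\<Sum>w\<in>V. (coord x w + d w) * vec (t w) r) = 0"
  proof
    fix r
    have "(\<Sum>w\<in>V. (coord x w + d w) * vec (t w) r)
        = (\<Sum>w\<in>V. coord x w * vec (t w) r) + (\<Sum>w\<in>V. d w * vec (t w) r)"
      by (simp add: distrib_right sum.distrib)
    also have "\<dots> = vec x r + vec x r" using P d2 by simp
    finally show "(\<Sum>w\<in>V. (coord x w + d w) * vec (t w) r) = 0" by simp
  qed
  then have "\<forall>w\<in>V. coord x w + d w = 0" using base[THEN spec, of "\<lambda>w. coord x w + d w"] by simp
  then have "\<forall>w\<in>V. coord x w = d w" by (simp add: bit_add_eq0)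
  then show ?thesis using P d1 by (auto simp: fun_eq_iff)
qed

lemma coord_spec:
  assumes "x \<in> U"
  shows "\<forall>w. w \<notin> V \<longrightarrow> coord x w = 0" "\<forall>r. vec x r = (\<Sum>w\<in>V. coord x w * vec (t w) r)"
proof -
  obtain c where c: "\<forall>r. vec x r = (\<Sum>w\<in>V. c w * vec (t w) r)" using span assms by blast
  define d where "d = (\<lambda>w. if w \<in> V then c w else 0)"
  have d1: "\<forall>w. w \<notin> V \<longrightarrow> d w = 0" unfolding d_def by simp
  have d2: "\<forall>r. vec x r = (\<Sum>w\<in>V. d w * vec (t w) r)" using c unfolding d_def by simp
  have "coord x = d" by (rule coord_unique[OF d1 d2])
  then show "\<forall>w. w \<notin> V \<longrightarrow> coord x w = 0" "\<forall>r. vec x r = (\<Sum>w\<in>V. coord x w * vec (t w) r)"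
    using d1 d2 by simp_all
qed

lemma coord_t: assumes "w \<in> V" shows "coord (t w) = (\<lambda>u. if u = w then 1 else 0)"
proof (rule coord_unique)
  show "\<forall>u. u \<notin> V \<longrightarrow> (if u = w then 1 else 0) = (0::bit)" using assms by auto
  show "\<forall>r. vec (t w) r = (\<Sum>u\<in>V. (if u = w then 1 else 0) * vec (t u) r)"
    using sum_delta_mult[OF fV assms, of "\<lambda>u. vec (t u) _"] by simp
qed

lemma coord_b: assumes "w \<in> V" shows "coord (b w) = (\<lambda>u. coord (a w) u + (if u = w then 1 else 0))"
proof (rule coord_unique)
  have aU: "a w \<in> U" using memU assms by simp
  show "\<forall>u. u \<notin> V \<longrightarrow> coord (a w) u + (if u = w then 1 else 0) = 0"
    using assms coord_spec(1)[OF aU] by auto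
  show "\<forall>r. vec (b w) r = (\<Sum>u\<in>V. (coord (a w) u + (if u = w then 1 else 0)) * vec (t u) r)"
  proof
    fix r
    have "(\<Sum>u\<in>V. (coord (a w) u + (if u = w then 1 else 0)) * vec (t u) r)
       = (\<Sum>u\<in>V. coord (a w) u * vec (t u) r) + (\<Sum>u\<in>V. (if u = w then 1 else 0) * vec (t u) r)"
      by (simp add: distrib_right sum.distrib)
    also have "(\<Sum>u\<in>V. (if u = w then 1 else 0) * vec (t u) r) = vec (t w) r"
      using sum_delta_mult[OF fV assms, of "\<lambda>u. vec (t u) r"] by simp
    also have "(\<Sum>u\<in>V. coord (a w) u * vec (t u) r) = vec (a w) r"
      using coord_spec(2)[OF aU] by simp
    finally show "vec (b w) r = (\<Sum>u\<in>V. (coord (a w) u + (if u = w then 1 else 0)) * vec (t u) r)"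
      using cyc assms by (simp add: add.commute)
  qed
qed

lemma indep_coord:
  assumes "I \<subseteq> U" shows "indep I \<longleftrightarrow> gf2_lin_indep coord I"
proof -
  have fI: "finite I" using assms fU finite_subset by blast
  have "indep I \<longleftrightarrow> gf2_lin_indep vec I" using rep assms unfolding col_indep_def by simp
  also have "\<dots> \<longleftrightarrow> gf2_lin_indep coord I"
    by (rule gf2_coord[OF fI fV base]) (use coord_spec assms in auto)
  finally show ?thesis .
qed

lemma coord_sum_t:
  assumes "S' \<subseteq> V"
  shows "(\<Sum>z\<in>t ` S'. coord z r) = (if r \<in> S' then 1 else 0)"
proof -
  have inj: "inj_on t S'" using injt assms inj_on_subset by blast
  have fS: "finite S'" using fV assms finite_subset by blast
  have "(\<Sum>z\<in>t ` S'. coord z r) = (\<Sum>w\<in>S'. coord (t w) r)"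
    by (simp add: sum.reindex[OF inj])
  also have "\<dots> = (\<Sum>w\<in>S'. (if r = w then 1 else 0))"
    using coord_t assms by (intro sum.cong) auto
  also have "\<dots> = (if r \<in> S' then 1 else 0)" using unit_sum[OF fS] by simp
  finally show ?thesis .
qed

lemma symm:
  assumes u: "u \<in> V" and v: "v \<in> V" and uv: "u \<noteq> v" and h0: "coord (a v) u = 0"
  shows "coord (a u) v = 0"
proof (rule ccontr)
  assume "coord (a u) v \<noteq> 0" then have h1: "coord (a u) v = 1" by simp
  define xu where "xu = (if coord (a u) u = 0 then a u else b u)"
  have xuU: "xu \<in> U" and xug: "xu \<in> g u" using memU[OF u] mem[OF u] unfolding xu_def by auto
  have cxu: "coord xu u = 0" "coord xu v = 1"
    using coord_b[OF u] h1 uv unfolding xu_def by auto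
  define y where "y = (if coord (a v) v = 0 then a v else b v)"
  have yU: "y \<in> U" and yg: "y \<in> g v" using memU[OF v] mem[OF v] unfolding y_def by auto
  have ytv: "y \<noteq> t v" using abc v unfolding y_def by auto
  have cy: "coord y u = 0" "coord y v = 0"
    using coord_b[OF v] h0 uv unfolding y_def by auto
  define I0 where "I0 = t ` (V - {u, v})"
  define I where "I = insert xu I0"
  have fI0: "finite I0" using fV unfolding I0_def by simp
  have fI: "finite I" using fI0 unfolding I_def by simp
  have I0U: "I0 \<subseteq> U" using tVU unfolding I0_def by auto
  have IU: "I \<subseteq> U" using I0U xuU unfolding I_def by auto
  have xuI0: "xu \<notin> I0"
  proof
    assume "xu \<in> I0"
    then obtain w where w: "w \<in> V - {u, v}" "xu = t w" unfolding I0_def by auto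
    then have "w = u" using dj[OF _ u _ xug] mem(1)[of w] by auto
    then show False using w by simp
  qed
  have indI: "indep I"
  proof -
    have "gf2_lin_indep coord I0" unfolding I0_def
      by (rule unit_indep) (use fV injt coord_t in \<open>auto intro: inj_on_subset\<close>)
    moreover have "\<forall>z\<in>I0. coord z v = 0" unfolding I0_def using coord_t by auto
    ultimately have "gf2_lin_indep coord I"
      unfolding I_def using gf2_insert_row[of coord I0 v xu] fI0 cxu(2) xuI0 by blast
    then show ?thesis using indep_coord[OF IU] by simp
  qed
  have cardI: "\<forall>\<omega>\<in>\<Omega>. card (I \<inter> \<omega>) \<le> 1"
  proof
    fix \<omega> assume "\<omega> \<in> \<Omega>"
    then obtain w where w: "w \<in> V" "\<omega> = g w" using gbij unfolding bij_betw_def by auto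
    have "I \<inter> g w \<subseteq> {if w = u then xu else t w}"
    proof
      fix z assume z: "z \<in> I \<inter> g w"
      show "z \<in> {if w = u then xu else t w}"
      proof (cases "z = xu")
        case True
        then have "w = u" using dj[OF w(1) u _ xug] z by auto
        then show ?thesis using True by simp
      next
        case False
        then obtain w'' where w'': "w'' \<in> V - {u, v}" "z = t w''" using z unfolding I_def I0_def by auto
        then have "w'' = w" using dj[OF _ w(1) _ ] mem(1)[of w''] z by auto
        then show ?thesis using w'' by auto
      qed
    qed
    then have "card (I \<inter> g w) \<le> card {if w = u then xu else t w}" by (rule card_mono[rotated]) simp
    then show "card (I \<inter> \<omega>) \<le> 1" using w by simp
  qed
  have disj: "g v \<inter> I = {}"
  proof (rule ccontr)
    assume "g v \<inter> I \<noteq> {}"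
    then obtain z where z: "z \<in> g v" "z \<in> I" by auto
    show False
    proof (cases "z = xu")
      case True then show False using dj[OF u v xug] z uv by auto
    next
      case False
      then obtain w'' where w'': "w'' \<in> V - {u, v}" "z = t w''" using z unfolding I_def I0_def by auto
      then have "w'' = v" using dj[OF _ v _ ] mem(1)[of w''] z by auto
      then show False using w'' by auto
    qed
  qed
  have "indep (insert (t v) I) \<or> indep (insert y I)"
    using sh gO[OF v] indI cardI disj mem(1)[OF v] yg ytv unfolding sheltering_def
    by (metis Int_commute)
  moreover have "\<not> indep (insert (t v) I)"
  proof -
    have tvI: "t v \<notin> I"
    proof
      assume "t v \<in> I"
      show False
      proof (cases "t v = xu")
        case True then show False using dj[OF u v xug] mem(1)[OF v] uv by auto
      next
        case False
        then obtain w'' where w'': "w'' \<in> V - {u, v}" "t v = t w''" using \<open>t v \<in> I\<close> unfolding I_def I0_def by auto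
        then show False using injt v unfolding inj_on_def by auto
      qed
    qed
    define S1 where "S1 = {w\<in>V - {u, v}. coord xu w = 1}"
    have S1V: "S1 \<subseteq> V" unfolding S1_def by auto
    have Ssub: "insert xu (t ` S1) \<subseteq> I" unfolding I_def I0_def S1_def by auto
    have xuS: "xu \<notin> t ` S1" using xuI0 unfolding I0_def S1_def by auto
    have fS: "finite (t ` S1)" using fV S1V finite_subset by blast
    have "\<forall>r. coord (t v) r = (\<Sum>z\<in>insert xu (t ` S1). coord z r)"
    proof
      fix r
      have "(\<Sum>z\<in>insert xu (t ` S1). coord z r) = coord xu r + (if r \<in> S1 then 1 else 0)"
        using xuS fS coord_sum_t[OF S1V] by simp
      also have "\<dots> = coord (t v) r"
      proof (cases "r \<in> V")
        case False
        then have "coord xu r = 0" using coord_spec(1)[OF xuU] by simp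
        then show ?thesis using False coord_t[OF v] v S1V by auto
      next
        case True
        show ?thesis
        proof (cases "r = v")
          case True then show ?thesis using coord_t[OF v] cxu unfolding S1_def by simp
        next
          case F: False
          show ?thesis
          proof (cases "r = u")
            case True then show ?thesis using coord_t[OF v] cxu F unfolding S1_def by simp
          next
            case False
            then show ?thesis using coord_t[OF v] F \<open>r \<in> V\<close> unfolding S1_def
              by (cases "coord xu r") simp_all
          qed
        qed
      qed
      finally show "coord (t v) r = (\<Sum>z\<in>insert xu (t ` S1). coord z r)" by (rule sym)
    qed
    from gf2_dep[OF tvI Ssub fI this]
    show ?thesis using indep_coord[of "insert (t v) I"] IU memU(1)[OF v] by simp
  qed
  moreover have "\<not> indep (insert y I)"
  proof -
    have yI: "y \<notin> I"
    proof
      assume "y \<in> I"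
      show False
      proof (cases "y = xu")
        case True then show False using dj[OF u v xug] yg uv by auto
      next
        case False
        then obtain w'' where w'': "w'' \<in> V - {u, v}" "y = t w''" using \<open>y \<in> I\<close> unfolding I_def I0_def by auto
        then have "w'' = v" using dj[OF _ v _ yg] mem(1)[of w''] by auto
        then show False using w'' by auto
      qed
    qed
    define S2 where "S2 = {w\<in>V - {u, v}. coord y w = 1}"
    have S2V: "S2 \<subseteq> V" unfolding S2_def by auto
    have Ssub: "t ` S2 \<subseteq> I" unfolding I_def I0_def S2_def by auto
    have "\<forall>r. coord y r = (\<Sum>z\<in>t ` S2. coord z r)"
    proof
      fix r
      have "(\<Sum>z\<in>t ` S2. coord z r) = (if r \<in> S2 then 1 else 0)"
        using coord_sum_t[OF S2V] by simp
      also have "\<dots> = coord y r"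
      proof (cases "r \<in> V")
        case False
        then show ?thesis using coord_spec(1)[OF yU] S2V by auto
      next
        case True
        show ?thesis
        proof (cases "r = v \<or> r = u")
          case True then show ?thesis using cy unfolding S2_def by auto
        next
          case False
          then show ?thesis using \<open>r \<in> V\<close> unfolding S2_def
            by (cases "coord y r") simp_all
        qed
      qed
      finally show "coord y r = (\<Sum>z\<in>t ` S2. coord z r)" by (rule sym)
    qed
    from gf2_dep[OF yI Ssub fI this]
    show ?thesis using indep_coord[of "insert y I"] IU yU by simp
  qed
  ultimately show False by blast
qed

definition EE :: "nat set set" where
  "EE = {{u, w} | u w. u \<in> V \<and> w \<in> V \<and> coord (a w) u = 1}"

lemma EE_sub: "e \<in> EE \<Longrightarrow> e \<subseteq> V" unfolding EE_def by auto

lemma adjE: assumes w: "w \<in> V" shows "adj_matrix EE u w = coord (a w) u"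
proof (cases "u \<in> V")
  case False
  have "{u, w} \<notin> EE" using EE_sub False by blast
  moreover have "coord (a w) u = 0" using coord_spec(1)[OF memU(2)[OF w]] False by simp
  ultimately show ?thesis unfolding adj_matrix_def by simp
next
  case u: True
  have "{u, w} \<in> EE \<longleftrightarrow> coord (a w) u = 1"
  proof
    assume "coord (a w) u = 1" then show "{u, w} \<in> EE" unfolding EE_def using u w by blast
  next
    assume "{u, w} \<in> EE"
    then obtain u' w' where h: "{u, w} = {u', w'}" "u' \<in> V" "w' \<in> V" "coord (a w') u' = 1"
      unfolding EE_def by blast
    from h(1) have "(u = u' \<and> w = w') \<or> (u = w' \<and> w = u')" by (simp add: doubleton_eq_iff)
    then show "coord (a w) u = 1"
    proof
      assume "u = u' \<and> w = w'" then show ?thesis using h by simp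
    next
      assume uw: "u = w' \<and> w = u'"
      show ?thesis
      proof (cases "u = w")
        case True then show ?thesis using uw h by simp
      next
        case False
        have "coord (a u) w = 1" using uw h by simp
        then show ?thesis using symm[OF u w False] by (cases "coord (a w) u") auto
      qed
    qed
  qed
  then show ?thesis unfolding adj_matrix_def by (cases "coord (a w) u") auto
qed

definition hh :: "nat wlabel \<Rightarrow> 'a" where
  "hh l = (case l of Phi w \<Rightarrow> t w | Chi w \<Rightarrow> a w | Psi w \<Rightarrow> b w)"

lemma ias_hh: assumes "l \<in> W V" shows "ias_col EE l = coord (hh l)"
proof -
  obtain w where w: "w \<in> V" "l = Phi w \<or> l = Chi w \<or> l = Psi w" using assms unfolding W_def by auto
  show ?thesis using w(2)
  proof (elim disjE)
    assume "l = Phi w" then show ?thesis using coord_t[OF w(1)] unfolding hh_def by simp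
  next
    assume "l = Chi w" then show ?thesis using adjE[OF w(1)] unfolding hh_def by (simp add: fun_eq_iff)
  next
    assume "l = Psi w" then show ?thesis using adjE[OF w(1)] coord_b[OF w(1)] unfolding hh_def
      by (simp add: fun_eq_iff)
  qed
qed

lemma hh_vt: assumes "w \<in> V" shows "hh ` vertex_triple w = g w"
  using abc assms unfolding vertex_triple_def hh_def by auto

lemma vt_W: "w \<in> V \<Longrightarrow> vertex_triple w \<subseteq> W V" unfolding vertex_triple_def W_def by auto

lemma W_vt: "W V = (\<Union>w\<in>V. vertex_triple w)" unfolding vertex_triple_def W_def by auto

lemma hh_inj: "inj_on hh (W V)"
proof (rule inj_onI)
  fix l1 l2 assume l1: "l1 \<in> W V" and l2: "l2 \<in> W V" and eq: "hh l1 = hh l2"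
  obtain w1 where w1: "w1 \<in> V" "l1 \<in> vertex_triple w1" using l1 W_vt by auto
  obtain w2 where w2: "w2 \<in> V" "l2 \<in> vertex_triple w2" using l2 W_vt by auto
  have "hh l1 \<in> g w1" "hh l2 \<in> g w2" using hh_vt w1 w2 by auto
  then have "w1 = w2" using dj[OF w1(1) w2(1)] eq by auto
  then show "l1 = l2" using w1 w2 abc eq unfolding vertex_triple_def hh_def by auto
qed

lemma Og: "\<Omega> = g ` V" using gbij unfolding bij_betw_def by simp

lemma hh_img: "hh ` W V = U"
proof
  show "hh ` W V \<subseteq> U"
  proof
    fix x assume "x \<in> hh ` W V"
    then obtain w l where "w \<in> V" "l \<in> vertex_triple w" "x = hh l" using W_vt by auto
    then have "x \<in> g w" using hh_vt by blast
    then show "x \<in> U" using gU \<open>w \<in> V\<close> by blast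
  qed
  show "U \<subseteq> hh ` W V"
  proof
    fix x assume "x \<in> U"
    then obtain w where w: "w \<in> V" "x \<in> g w" using part Og unfolding partition_on_def by auto
    then obtain l where "l \<in> vertex_triple w" "x = hh l" using hh_vt[OF w(1)] by blast
    moreover have "vertex_triple w \<subseteq> W V" using vt_W[OF w(1)] .
    ultimately show "x \<in> hh ` W V" by blast
  qed
qed

lemma hh_bij: "bij_betw hh (W V) U" using hh_inj hh_img unfolding bij_betw_def by simp

definition ff :: "'a \<Rightarrow> nat wlabel" where "ff = inv_into (W V) hh"

lemma ff_bij: "bij_betw ff U (W V)" unfolding ff_def by (rule bij_betw_inv_into[OF hh_bij])

lemma hh_ff: "x \<in> U \<Longrightarrow> hh (ff x) = x"
  unfolding ff_def using hh_img by (simp add: f_inv_into_f)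

lemma ff_hh: "l \<in> W V \<Longrightarrow> ff (hh l) = l"
  unfolding ff_def using hh_inj by (simp add: inv_into_f_f)

lemma iso: "matroid_iso ff U indep (W V) (ias_indep V EE)"
  unfolding matroid_iso_def
proof (intro conjI allI impI)
  show "bij_betw ff U (W V)" by (rule ff_bij)
  fix I assume IU: "I \<subseteq> U"
  define J where "J = ff ` I"
  have JW: "J \<subseteq> W V" using ff_bij IU unfolding J_def bij_betw_def by auto
  have hJ: "hh ` J = I" unfolding J_def using hh_ff IU by (force simp: image_image)
  have injJ: "inj_on hh J" using hh_inj JW inj_on_subset by blast
  have "indep I \<longleftrightarrow> gf2_lin_indep coord (hh ` J)" using indep_coord[OF IU] hJ by simp
  also have "\<dots> \<longleftrightarrow> gf2_lin_indep (\<lambda>l. coord (hh l)) J" by (rule gf2_reindex[OF injJ])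
  also have "\<dots> \<longleftrightarrow> gf2_lin_indep (ias_col EE) J"
    by (rule gf2_cong) (use ias_hh JW in auto)
  also have "\<dots> \<longleftrightarrow> ias_indep V EE J" unfolding ias_indep_def col_indep_def using JW by simp
  finally show "indep I \<longleftrightarrow> ias_indep V EE (ff ` I)" unfolding J_def .
qed

lemma classes: "(\<lambda>\<omega>. ff ` \<omega>) ` \<Omega> = vertex_triple ` V"
proof -
  have "ff ` g w = vertex_triple w" if w: "w \<in> V" for w
  proof -
    have "ff ` g w = ff ` hh ` vertex_triple w" using hh_vt[OF w] by simp
    also have "\<dots> = vertex_triple w" using ff_hh vt_W[OF w] by (force simp: image_image)
    finally show ?thesis .
  qed
  then show ?thesis unfolding Og image_image by (rule image_cong[OF refl])
qed

lemma graph: "looped_simple_graph V EE"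
  unfolding looped_simple_graph_def
proof (intro conjI ballI)
  show "finite V" by (rule fV)
  fix e assume "e \<in> EE"
  then obtain u w where e: "e = {u, w}" "u \<in> V" "w \<in> V" unfolding EE_def by blast
  then show "e \<subseteq> V" by auto
  show "card e = 1 \<or> card e = 2" using e by (cases "u = w") auto
qed

lemma main_ex: "\<exists>(V' :: nat set) (E :: nat set set) f.
        looped_simple_graph V' E \<and>
        matroid_iso f U indep (W V') (ias_indep V' E) \<and>
        (\<lambda>\<omega>. f ` \<omega>) ` \<Omega> = vertex_triple ` V'"
  using graph iso classes by blast

end


lemma pair_indep:
  assumes "x \<noteq> y" "v x r1 \<noteq> 0" "v y r2 \<noteq> 0" "v x r3 \<noteq> v y r3"
  shows "gf2_lin_indep v {x, y}"
  unfolding gf2_lin_indep_def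
proof (intro allI impI)
  fix c assume H: "\<forall>r. (\<Sum>z\<in>{x, y}. c z * v z r) = 0"
  then have H': "\<And>r. c x * v x r + c y * v y r = 0" using assms(1) by simp
  have "c x = 0 \<and> c y = 0"
  proof (cases "c x"; cases "c y")
    assume "c x = 1" "c y = 1" then show ?thesis using H'[of r3] assms(4)
      by (simp add: bit_add_eq0)
  next
    assume "c x = 1" "c y = 0" then show ?thesis using H'[of r1] assms(2) by simp
  next
    assume "c x = 0" "c y = 1" then show ?thesis using H'[of r2] assms(3) by simp
  qed simp
  then show "\<forall>z\<in>{x, y}. c z = 0" by simp
qed

lemma single_indep: "v x r \<noteq> 0 \<Longrightarrow> gf2_lin_indep v {x}"
  unfolding gf2_lin_indep_def by (auto dest: spec[of _ r])

lemma single_dep: "\<forall>r. v x r = 0 \<Longrightarrow> \<not> gf2_lin_indep v {x}"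
  unfolding gf2_lin_indep_def by (auto intro: exI[of _ "\<lambda>_. 1"])

lemma ias_supp:
  assumes "looped_simple_graph V E" "l \<in> W V" "r \<notin> V"
  shows "ias_col E l r = 0"
proof -
  have adj: "adj_matrix E r v = 0" for v
  proof -
    have "{r, v} \<notin> E" using assms(1,3) unfolding looped_simple_graph_def by auto
    then show ?thesis unfolding adj_matrix_def by simp
  qed
  show ?thesis using assms(2,3) adj unfolding W_def by auto
qed

lemma dir2:
  fixes V :: "nat set"
  assumes sh: "three_sheltering U indep \<Omega>" and G: "looped_simple_graph V E"
    and iso: "matroid_iso f U indep (W V) (ias_indep V E)"
    and cl: "(\<lambda>\<omega>. f ` \<omega>) ` \<Omega> = vertex_triple ` V"
  shows "binary U indep \<and> mrank indep \<le> card \<Omega> \<and> (\<forall>\<omega>\<in>\<Omega>. \<omega> \<in> cycle_space U indep)"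
proof -
  have mat: "matroid U indep" and part: "partition_on U \<Omega>"
    using sh unfolding three_sheltering_def sheltering_def by auto
  have fU: "finite U" and sub: "\<And>I. indep I \<Longrightarrow> I \<subseteq> U" and ind0: "indep {}"
    and aug: "\<And>I J. indep I \<Longrightarrow> indep J \<Longrightarrow> card I < card J \<Longrightarrow> \<exists>x\<in>J - I. indep (insert x I)"
    using mat unfolding matroid_def by auto
  have bij: "bij_betw f U (W V)" and isoI: "\<And>I. I \<subseteq> U \<Longrightarrow> indep I \<longleftrightarrow> ias_indep V E (f ` I)"
    using iso unfolding matroid_iso_def by auto
  have inj: "inj_on f U" using bij by (simp add: bij_betw_imp_inj_on)
  have fimg: "f ` U = W V" using bij by (simp add: bij_betw_imp_surj_on)
  define vec where "vec = (\<lambda>x. ias_col E (f x))"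
  have rep: "\<forall>I. indep I \<longleftrightarrow> col_indep U vec I"
  proof
    fix I show "indep I \<longleftrightarrow> col_indep U vec I"
    proof (cases "I \<subseteq> U")
      case True
      have "indep I \<longleftrightarrow> gf2_lin_indep (ias_col E) (f ` I)"
        using isoI[OF True] True fimg unfolding ias_indep_def col_indep_def by auto
      also have "\<dots> \<longleftrightarrow> gf2_lin_indep vec I"
        using gf2_reindex[of f I "ias_col E"] inj True unfolding vec_def
        by (meson inj_on_subset)
      finally show ?thesis using True unfolding col_indep_def by simp
    next
      case False then show ?thesis using sub unfolding col_indep_def by auto
    qed
  qed
  have binary: "binary U indep" unfolding binary_def using rep by blast
  have fV: "finite V" using G unfolding looped_simple_graph_def by simp
  have fO: "finite \<Omega>" using part fU unfolding partition_on_def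
    by (meson Sup_le_iff finite_Pow_iff finite_subset subsetI PowI)
  define T0 where "T0 = {x\<in>U. f x \<in> Phi ` V}"
  have fT0: "f ` T0 = Phi ` V"
  proof
    show "f ` T0 \<subseteq> Phi ` V" unfolding T0_def by auto
    show "Phi ` V \<subseteq> f ` T0"
    proof
      fix y assume y: "y \<in> Phi ` V"
      then have "y \<in> f ` U" using fimg unfolding W_def by auto
      then obtain x where "x \<in> U" "y = f x" by auto
      then show "y \<in> f ` T0" using y unfolding T0_def by auto
    qed
  qed
  have T0U: "T0 \<subseteq> U" unfolding T0_def by auto
  have injT0: "inj_on f T0" using inj T0U inj_on_subset by blast
  have "gf2_lin_indep (ias_col E) (Phi ` V)"
    by (rule unit_indep) (use fV in \<open>auto simp: inj_on_def\<close>)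
  then have "gf2_lin_indep vec T0"
    using gf2_reindex[OF injT0, of "ias_col E"] fT0 unfolding vec_def by simp
  then have indT0: "indep T0" using rep T0U unfolding col_indep_def by simp
  have cardT0: "card T0 = card V"
    using card_image[OF injT0] fT0 card_image[of Phi V] by (simp add: inj_on_def)
  have notaug: "\<not> indep (insert x T0)" if x: "x \<in> U" "x \<notin> T0" for x
  proof
    assume "indep (insert x T0)"
    then have "gf2_lin_indep (ias_col E) (f ` insert x T0)"
      using isoI[of "insert x T0"] x T0U unfolding ias_indep_def col_indep_def by auto
    moreover have "f ` insert x T0 = insert (f x) (Phi ` V)" using fT0 by simp
    ultimately have I: "gf2_lin_indep (ias_col E) (insert (f x) (Phi ` V))" by simp
    have fxW: "f x \<in> W V" using x fimg by auto
    have fxn: "f x \<notin> Phi ` V" using x unfolding T0_def by auto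
    define S where "S = {w\<in>V. ias_col E (f x) w = 1}"
    have fS: "finite S" using fV unfolding S_def by simp
    have "\<forall>r. ias_col E (f x) r = (\<Sum>z\<in>Phi ` S. ias_col E z r)"
    proof
      fix r
      have "(\<Sum>z\<in>Phi ` S. ias_col E z r) = (\<Sum>w\<in>S. ias_col E (Phi w) r)"
        by (subst sum.reindex) (auto simp: inj_on_def)
      also have "\<dots> = (\<Sum>w\<in>S. (if r = w then 1 else 0))" by simp
      also have "\<dots> = (if r \<in> S then 1 else 0)" using unit_sum[OF fS] by simp
      also have "\<dots> = ias_col E (f x) r"
      proof (cases "r \<in> V")
        case True then show ?thesis unfolding S_def by (cases "ias_col E (f x) r") simp_all
      next
        case False
        have "r \<notin> S" using False unfolding S_def by simp
        then show ?thesis using ias_supp[OF G fxW False] by simp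
      qed
      finally show "ias_col E (f x) r = (\<Sum>z\<in>Phi ` S. ias_col E z r)" by (rule sym)
    qed
    note eq = this
    have sub: "Phi ` S \<subseteq> Phi ` V" unfolding S_def by auto
    have "\<not> gf2_lin_indep (ias_col E) (insert (f x) (Phi ` V))"
      using gf2_dep[OF fxn sub _ eq] fV by simp
    then show False using I by simp
  qed
  have cardI: "card I \<le> card V" if indI: "indep I" for I
  proof (rule ccontr)
    assume "\<not> card I \<le> card V"
    then obtain x where "x \<in> I - T0" "indep (insert x T0)" using aug[OF indT0 indI] cardT0 by auto
    then show False using notaug sub[OF indI] by auto
  qed
  have cVO: "card V \<le> card \<Omega>"
  proof -
    have "card V = card (vertex_triple ` V)"
      by (rule card_image[symmetric]) (auto simp: inj_on_def vertex_triple_def)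
    also have "\<dots> \<le> card \<Omega>" unfolding cl[symmetric] using fO by (rule card_image_le)
    finally show ?thesis .
  qed
  have rank: "mrank indep \<le> card \<Omega>"
  proof -
    have fin: "finite {card I | I. indep I}"
      by (rule finite_subset[of _ "card ` Pow U"]) (use sub fU in auto)
    have ne: "{card I | I. indep I} \<noteq> {}" using ind0 by auto
    show ?thesis unfolding mrank_def using cardI cVO
      by (subst Max_le_iff[OF fin ne]) fastforce
  qed
  have cyc: "\<omega> \<in> cycle_space U indep" if w: "\<omega> \<in> \<Omega>" for \<omega>
  proof -
    have wU: "\<omega> \<subseteq> U" using part w unfolding partition_on_def by auto
    obtain v where v: "v \<in> V" "f ` \<omega> = vertex_triple v" using cl w by (metis imageE image_eqI)
    obtain p where p: "p \<in> \<omega>" "f p = Phi v" using v unfolding vertex_triple_def by (metis imageE insertI1)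
    obtain q where q: "q \<in> \<omega>" "f q = Chi v" using v unfolding vertex_triple_def by (metis imageE insertI1 insertI2)
    obtain s where s: "s \<in> \<omega>" "f s = Psi v" using v unfolding vertex_triple_def
      by (metis imageE insertI1 insertI2)
    have wpqs: "\<omega> = {p, q, s}"
    proof
      show "{p, q, s} \<subseteq> \<omega>" using p q s by auto
      show "\<omega> \<subseteq> {p, q, s}"
      proof
        fix x assume x: "x \<in> \<omega>"
        then have "f x \<in> {Phi v, Chi v, Psi v}" using v unfolding vertex_triple_def by auto
        then have "f x = f p \<or> f x = f q \<or> f x = f s" using p q s by auto
        moreover have "x \<in> U" "p \<in> U" "q \<in> U" "s \<in> U" using x p q s wU by auto
        ultimately show "x \<in> {p, q, s}" using inj_onD[OF inj] by blast
      qed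
    qed
    have dist: "p \<noteq> q" "p \<noteq> s" "q \<noteq> s" using p q s by auto
    have pqsU: "p \<in> U" "q \<in> U" "s \<in> U" using p q s wU by auto
    have vp: "vec p r = (if r = v then 1 else 0)" for r unfolding vec_def using p by simp
    have vq: "vec q r = adj_matrix E r v" for r unfolding vec_def using q by simp
    have vs: "vec s r = adj_matrix E r v + (if r = v then 1 else 0)" for r unfolding vec_def using s by simp
    have circ: "circuit U indep C" if "C \<subseteq> U" "\<not> gf2_lin_indep vec C" "\<forall>x\<in>C. gf2_lin_indep vec (C - {x})" for C
      using that rep unfolding circuit_def col_indep_def by auto
    have sing: "circuit U indep {x}" if "x \<in> U" "\<forall>r. vec x r = 0" for x
      by (rule circ) (use that single_dep[of vec x] in \<open>auto simp: gf2_lin_indep_def\<close>)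
    have par: "circuit U indep {x, y}" if "x \<in> U" "y \<in> U" "x \<noteq> y" "\<forall>r. vec x r = vec y r" "vec x r0 \<noteq> 0" for x y r0
    proof (rule circ)
      show "{x, y} \<subseteq> U" using that by auto
      show "\<not> gf2_lin_indep vec {x, y}"
        unfolding gf2_lin_indep_def using that
        by (auto intro!: exI[of _ "\<lambda>_. 1"])
      show "\<forall>z\<in>{x, y}. gf2_lin_indep vec ({x, y} - {z})"
        using that single_indep[of vec x r0] single_indep[of vec y r0]
        by (auto simp: insert_Diff_if)
    qed
    show ?thesis
    proof (cases "\<forall>r. vec q r = 0")
      case True
      have "\<forall>r. vec p r = vec s r" using True vp vq vs by simp
      then have c2: "circuit U indep {p, s}" using par[of p s v] pqsU dist vp by simp
      have c1: "circuit U indep {q}" using sing pqsU True by simp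
      show ?thesis unfolding cycle_space_def
        by (rule CollectI, rule exI[of _ "{{q}, {p, s}}"]) (use c1 c2 dist wpqs in \<open>auto simp: disjoint_def\<close>)
    next
      case F1: False
      show ?thesis
      proof (cases "\<forall>r. vec s r = 0")
        case True
        have "\<forall>r. vec p r = vec q r" using True vp vq vs
          by (metis bit_add_eq0)
        then have c2: "circuit U indep {p, q}" using par[of p q v] pqsU dist vp by simp
        have c1: "circuit U indep {s}" using sing pqsU True by simp
        show ?thesis unfolding cycle_space_def
          by (rule CollectI, rule exI[of _ "{{s}, {p, q}}"]) (use c1 c2 dist wpqs in \<open>auto simp: disjoint_def\<close>)
      next
        case F2: False
        obtain r1 where r1: "vec q r1 \<noteq> 0" using F1 by auto
        obtain r2 where r2: "vec s r2 \<noteq> 0" using F2 by auto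
        have pq: "gf2_lin_indep vec {p, q}"
        proof -
          have "vec p r2 \<noteq> vec q r2" using r2 vp vq vs by auto
          then show ?thesis using pair_indep[of p q vec v r1 r2] dist vp r1 by simp
        qed
        have ps: "gf2_lin_indep vec {p, s}"
        proof -
          have "vec p r1 \<noteq> vec s r1" using r1 vp vq vs by (cases "r1 = v") auto
          then show ?thesis using pair_indep[of p s vec v r2 r1] dist vp r2 by simp
        qed
        have qs: "gf2_lin_indep vec {q, s}"
          using pair_indep[of q s vec r1 r2 v] dist r1 r2 vq vs by simp
        have dep: "\<not> gf2_lin_indep vec {p, q, s}"
          unfolding gf2_lin_indep_def using dist vp vq vs
          by (auto intro!: exI[of _ "\<lambda>_. 1"])
        have "circuit U indep {p, q, s}"
        proof (rule circ)
          show "{p, q, s} \<subseteq> U" using pqsU by auto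
          show "\<not> gf2_lin_indep vec {p, q, s}" by (rule dep)
          have e1: "{p, q, s} - {p} = {q, s}" "{p, q, s} - {q} = {p, s}" "{p, q, s} - {s} = {p, q}"
            using dist by auto
          show "\<forall>x\<in>{p, q, s}. gf2_lin_indep vec ({p, q, s} - {x})"
            using e1 pq ps qs by auto
        qed
        then show ?thesis unfolding cycle_space_def wpqs
          by (intro CollectI exI[of _ "{{p, q, s}}"]) (auto simp: disjoint_def)
      qed
    qed
  qed
  show ?thesis using binary rank cyc by blast
qed



lemma transversal:
  assumes sh: "sheltering U indep \<Omega>" and c3: "\<forall>\<omega>\<in>\<Omega>. card \<omega> = 3"
    and F: "finite F" "F \<subseteq> \<Omega>"
  shows "\<exists>I. indep I \<and> I \<subseteq> \<Union>F \<and> (\<forall>\<omega>\<in>F. card (I \<inter> \<omega>) = 1)"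
  using F
proof (induction F rule: finite_induct)
  case empty
  have "indep {}" using sh unfolding sheltering_def matroid_def by auto
  then show ?case by auto
next
  case (insert \<omega> F)
  have part: "partition_on U \<Omega>" using sh unfolding sheltering_def by auto
  have wO: "\<omega> \<in> \<Omega>" and FO: "F \<subseteq> \<Omega>" using insert by auto
  obtain I where I: "indep I" "I \<subseteq> \<Union>F" "\<forall>\<omega>'\<in>F. card (I \<inter> \<omega>') = 1" using insert FO by blast
  have djn: "\<omega>1 \<inter> \<omega>2 = {}" if "\<omega>1 \<in> \<Omega>" "\<omega>2 \<in> \<Omega>" "\<omega>1 \<noteq> \<omega>2" for \<omega>1 \<omega>2
    using part that unfolding partition_on_def disjoint_def by blast
  have dF: "\<omega> \<inter> \<omega>' = {}" if "\<omega>' \<in> F" for \<omega>'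
    using djn[OF wO] FO that insert(2) by blast
  have Iw: "\<omega> \<inter> I = {}" using I(2) dF by blast
  have cle: "\<forall>\<omega>'\<in>\<Omega>. card (I \<inter> \<omega>') \<le> 1"
  proof
    fix \<omega>' assume w': "\<omega>' \<in> \<Omega>"
    show "card (I \<inter> \<omega>') \<le> 1"
    proof (cases "\<omega>' \<in> F")
      case True then show ?thesis using I(3) by simp
    next
      case False
      have "I \<inter> \<omega>' = {}"
      proof (rule ccontr)
        assume "I \<inter> \<omega>' \<noteq> {}"
        then obtain x \<omega>'' where "x \<in> \<omega>'" "x \<in> \<omega>''" "\<omega>'' \<in> F" using I(2) by blast
        then show False using djn[OF w', of \<omega>''] FO False by blast
      qed
      then show ?thesis by simp
    qed
  qed
  obtain x y z where xyz: "\<omega> = {x, y, z}" "x \<noteq> y" using c3 wO card_3_iff[of \<omega>] by auto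
  have "indep (insert x I) \<or> indep (insert y I)"
    using sh I(1) cle wO Iw xyz unfolding sheltering_def by blast
  then obtain p where p: "p \<in> \<omega>" "indep (insert p I)" using xyz by auto
  have pF: "p \<notin> \<omega>'" if "\<omega>' \<in> F" for \<omega>' using dF[OF that] p by blast
  show ?case
  proof (intro exI conjI ballI)
    show "indep (insert p I)" by (rule p(2))
    show "insert p I \<subseteq> \<Union>(insert \<omega> F)" using p I(2) by auto
    fix \<omega>' assume "\<omega>' \<in> insert \<omega> F"
    then show "card (insert p I \<inter> \<omega>') = 1"
    proof
      assume "\<omega>' = \<omega>"
      then have "insert p I \<inter> \<omega>' = {p}" using p Iw by auto
      then show ?thesis by simp
    next
      assume w': "\<omega>' \<in> F"
      then have "insert p I \<inter> \<omega>' = I \<inter> \<omega>'" using pF by auto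
      then show ?thesis using I(3) w' by simp
    qed
  qed
qed

lemma dir1:
  assumes sh3: "three_sheltering U indep \<Omega>" and bin: "binary U indep"
    and rk: "mrank indep \<le> card \<Omega>" and cyc: "\<forall>\<omega>\<in>\<Omega>. \<omega> \<in> cycle_space U indep"
  shows "\<exists>(V :: nat set) (E :: nat set set) f.
        looped_simple_graph V E \<and>
        matroid_iso f U indep (W V) (ias_indep V E) \<and>
        (\<lambda>\<omega>. f ` \<omega>) ` \<Omega> = vertex_triple ` V"
proof -
  have sh: "sheltering U indep \<Omega>" and c3: "\<forall>\<omega>\<in>\<Omega>. card \<omega> = 3"
    using sh3 unfolding three_sheltering_def by auto
  have mat: "matroid U indep" and part: "partition_on U \<Omega>" using sh unfolding sheltering_def by auto
  have fU: "finite U" and sub: "\<And>I. indep I \<Longrightarrow> I \<subseteq> U" using mat unfolding matroid_def by auto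
  have UO: "\<Union>\<Omega> = U" using part unfolding partition_on_def by auto
  have fO: "finite \<Omega>"
  proof -
    have "\<Omega> \<subseteq> Pow U" using UO by auto
    then show ?thesis using fU finite_subset by blast
  qed
  obtain T where T: "indep T" "T \<subseteq> U" "\<forall>\<omega>\<in>\<Omega>. card (T \<inter> \<omega>) = 1"
    using transversal[OF sh c3 fO subset_refl] UO by auto
  obtain vec :: "'a \<Rightarrow> nat \<Rightarrow> bit" where rep: "\<forall>I. indep I \<longleftrightarrow> col_indep U vec I"
    using bin unfolding binary_def by blast
  define V where "V = {0..<card \<Omega>}"
  have fV: "finite V" unfolding V_def by simp
  obtain g where gbij: "bij_betw g V \<Omega>" unfolding V_def using ex_bij_betw_nat_finite[OF fO] by blast
  have gO: "g w \<in> \<Omega>" if "w \<in> V" for w using gbij that bij_betwE by blast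
  have Og: "\<Omega> = g ` V" using gbij unfolding bij_betw_def by simp
  have dj: "w = w'" if "w \<in> V" "w' \<in> V" "x \<in> g w" "x \<in> g w'" for w w' x
  proof -
    have "g w = g w'"
    proof (rule ccontr)
      assume "g w \<noteq> g w'"
      then have "g w \<inter> g w' = {}" using part gO that(1,2) unfolding partition_on_def disjoint_def by blast
      then show False using that(3,4) by auto
    qed
    then show ?thesis using gbij that(1,2) unfolding bij_betw_def inj_on_def by blast
  qed
  have "\<forall>w\<in>V. \<exists>x. T \<inter> g w = {x}" using T(3) gO by (metis One_nat_def card_1_singleton_iff)
  then obtain t where t: "\<forall>w\<in>V. T \<inter> g w = {t w}" by (metis bchoice)
  have tmem: "t w \<in> g w" "t w \<in> T" if "w \<in> V" for w using t that by auto
  have TtV: "T = t ` V"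
  proof
    show "t ` V \<subseteq> T" using tmem by auto
    show "T \<subseteq> t ` V"
    proof
      fix x assume x: "x \<in> T"
      then obtain w where w: "w \<in> V" "x \<in> g w" using T(2) UO Og by auto
      then have "x \<in> T \<inter> g w" using x by auto
      then show "x \<in> t ` V" using t w by auto
    qed
  qed
  have injt: "inj_on t V" unfolding inj_on_def using tmem dj by metis
  have indT: "indep (t ` V)" using T(1) TtV by simp
  have "\<forall>w\<in>V. \<exists>p. g w = {t w, fst p, snd p} \<and> t w \<noteq> fst p \<and> t w \<noteq> snd p \<and> fst p \<noteq> snd p"
  proof
    fix w assume w: "w \<in> V"
    have "card (g w) = 3" using c3 gO[OF w] by simp
    then have "finite (g w)" by (metis card.infinite zero_neq_numeral)
    then have "card (g w - {t w}) = 2" using \<open>card (g w) = 3\<close> tmem(1)[OF w] by simp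
    then obtain x y where xy: "g w - {t w} = {x, y}" "x \<noteq> y" using card_2_iff by metis
    have "g w = {t w, x, y}" using xy(1) tmem(1)[OF w] by blast
    moreover have "t w \<noteq> x" "t w \<noteq> y" using xy(1) by auto
    ultimately show "\<exists>p. g w = {t w, fst p, snd p} \<and> t w \<noteq> fst p \<and> t w \<noteq> snd p \<and> fst p \<noteq> snd p"
      using xy(2) by (intro exI[of _ "(x, y)"]) simp
  qed
  then obtain ab where ab: "\<forall>w\<in>V. g w = {t w, fst (ab w), snd (ab w)} \<and> t w \<noteq> fst (ab w) \<and> t w \<noteq> snd (ab w) \<and> fst (ab w) \<noteq> snd (ab w)"
    by (metis bchoice)
  define a where "a = (\<lambda>w. fst (ab w))"
  define b where "b = (\<lambda>w. snd (ab w))"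
  have abc: "\<forall>w\<in>V. g w = {t w, a w, b w} \<and> t w \<noteq> a w \<and> t w \<noteq> b w \<and> a w \<noteq> b w"
    using ab unfolding a_def b_def by blast
  have cardT: "card (t ` V) = card \<Omega>" using card_image[OF injt] unfolding V_def by simp
  have indle: "card I \<le> card \<Omega>" if "indep I" for I
  proof -
    have fin: "finite {card I | I. indep I}"
      by (rule finite_subset[of _ "card ` Pow U"]) (use sub fU in auto)
    have "card I \<le> mrank indep" unfolding mrank_def using that fin by (intro Max_ge) auto
    then show ?thesis using rk by simp
  qed
  have span: "\<forall>x\<in>U. \<exists>c. \<forall>r. vec x r = (\<Sum>w\<in>V. c w * vec (t w) r)"
  proof
    fix x assume xU: "x \<in> U"
    show "\<exists>c. \<forall>r. vec x r = (\<Sum>w\<in>V. c w * vec (t w) r)"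
    proof (cases "x \<in> t ` V")
      case True
      then obtain w0 where w0: "w0 \<in> V" "x = t w0" by auto
      show ?thesis
        by (rule exI[of _ "\<lambda>w. if w = w0 then 1 else 0"]) (use sum_delta_mult[OF fV w0(1)] w0 in simp)
    next
      case False
      have fT: "finite (t ` V)" using fV by simp
      have "card (insert x (t ` V)) = card \<Omega> + 1" using False fT cardT by simp
      then have nind: "\<not> indep (insert x (t ` V))" using indle by fastforce
      have sub2: "insert x (t ` V) \<subseteq> U" using xU T(2) TtV by auto
      then have "\<not> gf2_lin_indep vec (insert x (t ` V))" using nind rep unfolding col_indep_def by simp
      then obtain c y where c: "\<forall>r. (\<Sum>z\<in>insert x (t ` V). c z * vec z r) = 0"
        and y: "y \<in> insert x (t ` V)" "c y \<noteq> 0"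
        unfolding gf2_lin_indep_def by blast
      have s: "\<And>r. (\<Sum>z\<in>insert x (t ` V). c z * vec z r) = c x * vec x r + (\<Sum>z\<in>t ` V. c z * vec z r)"
        using False fT by simp
      have gT: "gf2_lin_indep vec (t ` V)" using indT rep unfolding col_indep_def by simp
      have cx: "c x = 1"
      proof (rule ccontr)
        assume "c x \<noteq> 1" then have "c x = 0" by simp
        then have "\<forall>r. (\<Sum>z\<in>t ` V. c z * vec z r) = 0" using c s by simp
        from gf2D[OF gT this] have "\<forall>z\<in>t ` V. c z = 0" by blast
        then show False using y \<open>c x = 0\<close> by auto
      qed
      have "\<forall>r. vec x r = (\<Sum>w\<in>V. c (t w) * vec (t w) r)"
      proof
        fix r
        have "vec x r + (\<Sum>z\<in>t ` V. c z * vec z r) = 0" using c s[of r] cx by simp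
        then have "vec x r = (\<Sum>z\<in>t ` V. c z * vec z r)" by (simp add: bit_add_eq0)
        also have "\<dots> = (\<Sum>w\<in>V. c (t w) * vec (t w) r)" by (simp add: sum.reindex[OF injt])
        finally show "vec x r = (\<Sum>w\<in>V. c (t w) * vec (t w) r)" .
      qed
      then show ?thesis by (intro exI[of _ "\<lambda>w. c (t w)"])
    qed
  qed
  have cycv: "\<forall>w\<in>V. \<forall>r. vec (b w) r = vec (t w) r + vec (a w) r"
  proof (intro ballI allI)
    fix w r assume w: "w \<in> V"
    have "(\<Sum>x\<in>g w. vec x r) = 0" using cycle_sum[OF rep _ fU] cyc gO[OF w] by blast
    then have "vec (t w) r + (vec (a w) r + vec (b w) r) = 0" using abc w by simp
    then show "vec (b w) r = vec (t w) r + vec (a w) r"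
      by (cases "vec (t w) r"; cases "vec (a w) r"; cases "vec (b w) r") simp_all
  qed
  interpret S1 U indep \<Omega> vec V g t a b
    by unfold_locales (use sh rep fV gbij abc indT span cycv in auto)
  show ?thesis by (rule main_ex)
qed


theorem theorem2p11:
  fixes U :: "'a set" and indep :: "'a set \<Rightarrow> bool" and \<Omega> :: "'a set set"
  assumes "three_sheltering U indep \<Omega>"
  shows "(binary U indep \<and> mrank indep \<le> card \<Omega> \<and> (\<forall>\<omega>\<in>\<Omega>. \<omega> \<in> cycle_space U indep))
     \<longleftrightarrow>
     (\<exists>(V :: nat set) (E :: nat set set) f.
        looped_simple_graph V E \<and>
        matroid_iso f U indep (W V) (ias_indep V E) \<and>
        (\<lambda>\<omega>. f ` \<omega>) ` \<Omega> = vertex_triple ` V)"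
proof
  assume "binary U indep \<and> mrank indep \<le> card \<Omega> \<and> (\<forall>\<omega>\<in>\<Omega>. \<omega> \<in> cycle_space U indep)"
  then have h1: "binary U indep" "mrank indep \<le> card \<Omega>" "\<forall>\<omega>\<in>\<Omega>. \<omega> \<in> cycle_space U indep" by auto
  show "\<exists>(V :: nat set) (E :: nat set set) f.
        looped_simple_graph V E \<and>
        matroid_iso f U indep (W V) (ias_indep V E) \<and>
        (\<lambda>\<omega>. f ` \<omega>) ` \<Omega> = vertex_triple ` V"
    by (rule dir1[OF assms h1])
next
  assume "\<exists>(V :: nat set) (E :: nat set set) f.
        looped_simple_graph V E \<and>
        matroid_iso f U indep (W V) (ias_indep V E) \<and>
        (\<lambda>\<omega>. f ` \<omega>) ` \<Omega> = vertex_triple ` V"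
  then obtain V :: "nat set" and E f where h: "looped_simple_graph V E"
    "matroid_iso f U indep (W V) (ias_indep V E)" "(\<lambda>\<omega>. f ` \<omega>) ` \<Omega> = vertex_triple ` V"
    apply (elim exE conjE) by (rule that)
  show "binary U indep \<and> mrank indep \<le> card \<Omega> \<and> (\<forall>\<omega>\<in>\<Omega>. \<omega> \<in> cycle_space U indep)"
    by (rule dir2[OF assms h])
qed

end
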